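(* For positive integers $N,S$, let $e_n(s)$ ($1\le n\le N$, $1\le s\le S$) be drawn independently and uniformly at random from $\{-1,1\}$ and write $G_{N,S}(s)=(e_1(s),\dots,e_N(s))$. For every $\varepsilon>0$, \[ \mathbb{P}\Bigg[\Phi_k(G_{N,S})\le(1+\varepsilon)\sqrt{2N\log\left(\binom{SN}{k}-\binom{S(N-1)}{k}\right)}\ \text{ for all } k \text{ with } 2\le k<SN\Bigg]\to 1 \] as $N\to\infty$.
   Context: For a map $G_{N,S}:\{1,\dots,S\}\to\{-1,+1\}^N$, $G_{N,S}(s)=(e_1(s),\dots,e_N(s))$, the cross-correlation measure of order $k$ is \[ \Phi_k(G_{N,S})=\max\left|\sum_{n=1}^M e_{n+d_1}(s_1)\cdots e_{n+d_k}(s_k)\right|, \] the maximum taken over all integers $M,d_1,\dots,d_k$ and $1\le s_1,\dots,s_k\le S$ with $0\le d_1\le\dots\le d_k<M+d_k\le N$ and $d_i\ne d_j$ whenever $s_i=s_j$. $\log$ is the natural logarithm. *)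

theory Defs
  imports "HOL-Probability.Probability"
begin

text \<open>A family of S binary sequences of length N: e (n, s) = e_n(s) for
  1 \<le> n \<le> N, 1 \<le> s \<le> S, values in {-1,1}; extensional outside.\<close>
definition sign_families :: "nat \<Rightarrow> nat \<Rightarrow> (nat \<times> nat \<Rightarrow> int) set" where
  "sign_families N S = ({1..N} \<times> {1..S}) \<rightarrow>\<^sub>E {-1, 1}"

definition admissible :: "nat \<Rightarrow> nat \<Rightarrow> nat \<Rightarrow> nat \<Rightarrow> (nat \<Rightarrow> nat) \<Rightarrow> (nat \<Rightarrow> nat) \<Rightarrow> bool" where
  "admissible k N S M d s \<longleftrightarrow>
     d \<in> {1..k} \<rightarrow>\<^sub>E {0..N} \<and> s \<in> {1..k} \<rightarrow>\<^sub>E {1..S} \<and> M \<in> {1..N} \<and>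
     (\<forall>i j. 1 \<le> i \<and> i \<le> j \<and> j \<le> k \<longrightarrow> d i \<le> d j) \<and>
     d k < M + d k \<and> M + d k \<le> N \<and>
     (\<forall>i\<in>{1..k}. \<forall>j\<in>{1..k}. i \<noteq> j \<and> s i = s j \<longrightarrow> d i \<noteq> d j)"

definition Phi :: "nat \<Rightarrow> nat \<Rightarrow> nat \<Rightarrow> (nat \<times> nat \<Rightarrow> int) \<Rightarrow> int" where
  "Phi k N S e = Max {\<bar>\<Sum>n=1..M. \<Prod>i=1..k. e (n + d i, s i)\<bar> | M d s. admissible k N S M d s}"

end

theory Submission
  imports Defs
begin

lemma cosh_le_exp_sq: "cosh (x::real) \<le> exp (x^2/2)"
proof -
  have aux: "cosh y \<le> exp (y^2/2)" if "y \<ge> 0" for y :: real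
  proof -
    have h: "-(2*y) * (1/2) + ln (1 + (1/2) * (exp (2*y) - 1)) \<le> (2*y)^2/8"
      using Hoeffdings_lemma_aux[of "2*y" "1/2"] that by simp
    have e: "1 + (1/2) * (exp (2*y) - 1) = exp y * cosh y"
      by (simp add: cosh_def field_simps exp_add[symmetric] mult_2)
    have "ln (exp y * cosh y) = y + ln (cosh y)"
      by (simp add: ln_mult)
    with h e have "ln (cosh y) \<le> y^2/2" by (simp add: power2_eq_square)
    thus ?thesis by (metis cosh_real_pos exp_le_cancel_iff exp_ln)
  qed
  show ?thesis
  proof (cases "x \<ge> 0")
    case True thus ?thesis by (rule aux)
  next
    case False thus ?thesis using aux[of "-x"] by simp
  qed
qed


lemma prod_pm1: "finite A \<Longrightarrow> (\<And>x. x \<in> A \<Longrightarrow> f x \<in> {-1,1::int}) \<Longrightarrow> prod f A \<in> {-1,1}"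
proof (induction A rule: finite_induct)
  case (insert x F)
  have a: "f x = 1 \<or> f x = -1" using insert.prems by auto
  have b: "prod f F = 1 \<or> prod f F = -1" using insert by auto
  have "prod f (insert x F) = f x * prod f F" using insert(1,2) by simp
  then show ?case using a b by auto
qed auto

definition flip :: "nat \<times> nat \<Rightarrow> (nat \<times> nat \<Rightarrow> int) \<Rightarrow> (nat \<times> nat \<Rightarrow> int)" where
  "flip q e = e(q := - e q)"

lemma flip_flip[simp]: "flip q (flip q e) = e"
  by (simp add: flip_def)

lemma sf_val: "e \<in> sign_families N S \<Longrightarrow> q \<in> {1..N} \<times> {1..S} \<Longrightarrow> e q \<in> {-1,1}"
  unfolding sign_families_def by (auto simp: PiE_iff)

lemma flip_in: "e \<in> sign_families N S \<Longrightarrow> q \<in> {1..N} \<times> {1..S} \<Longrightarrow> flip q e \<in> sign_families N S"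
  unfolding sign_families_def flip_def by (auto simp: PiE_iff extensional_def)

lemma finite_sf: "finite (sign_families N S)"
  unfolding sign_families_def by (intro finite_PiE) auto

lemma sf_nonempty: "sign_families N S \<noteq> {}"
  unfolding sign_families_def by (simp add: PiE_eq_empty_iff)

lemma sum_flip:
  assumes "q \<in> {1..N} \<times> {1..S}"
  shows "(\<Sum>e\<in>sign_families N S. f e) = (\<Sum>e\<in>sign_families N S. f (flip q e))"
  by (rule sum.reindex_bij_witness[where i="flip q" and j="flip q"]) (auto intro: flip_in[OF _ assms])

lemma coord_lemma:
  fixes \<phi> :: "(nat \<times> nat \<Rightarrow> int) \<Rightarrow> real" and l :: real and g :: "(nat \<times> nat \<Rightarrow> int) \<Rightarrow> int"
  assumes q: "q \<in> {1..N} \<times> {1..S}"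
    and phi: "\<And>e. \<phi> (flip q e) = \<phi> e"
    and gi: "\<And>e. g (flip q e) = g e"
    and gv: "\<And>e. e \<in> sign_families N S \<Longrightarrow> g e \<in> {-1,1}"
  shows "(\<Sum>e\<in>sign_families N S. \<phi> e * exp (l * of_int (e q * g e))) = cosh l * (\<Sum>e\<in>sign_families N S. \<phi> e)"
proof -
  let ?F = "sign_families N S"
  have fq: "flip q e q = - e q" for e by (simp add: flip_def)
  have 1: "(\<Sum>e\<in>?F. \<phi> e * exp (l * of_int (e q * g e))) = (\<Sum>e\<in>?F. \<phi> e * exp (- (l * of_int (e q * g e))))"
    by (subst sum_flip[OF q]) (simp add: phi gi fq)
  have 2: "\<phi> e * exp (l * of_int (e q * g e)) + \<phi> e * exp (- (l * of_int (e q * g e))) = 2 * cosh l * \<phi> e"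
    if "e \<in> ?F" for e
  proof -
    have "e q * g e \<in> {-1,1}" using sf_val[OF that q] gv[OF that] by auto
    then have "(of_int (e q * g e)::real) = 1 \<or> (of_int (e q * g e)::real) = -1" by (auto simp del: of_int_mult)
    then show ?thesis
    proof (elim disjE)
      assume h: "(of_int (e q * g e)::real) = 1"
      show ?thesis by (simp only: h) (simp add: cosh_def algebra_simps)
    next
      assume h: "(of_int (e q * g e)::real) = -1"
      show ?thesis by (simp only: h) (simp add: cosh_def algebra_simps)
    qed
  qed
  have "2 * (\<Sum>e\<in>?F. \<phi> e * exp (l * of_int (e q * g e))) = (\<Sum>e\<in>?F. 2 * cosh l * \<phi> e)"
    by (subst mult_2, subst (2) 1, subst sum.distrib[symmetric]) (rule sum.cong[OF refl], erule 2)
  hence "2 * (\<Sum>e\<in>?F. \<phi> e * exp (l * of_int (e q * g e))) = 2 * (cosh l * (\<Sum>e\<in>?F. \<phi> e))"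
    by (simp only: sum_distrib_left mult.assoc)
  thus ?thesis by simp
qed

definition W :: "(nat \<times> nat) set \<Rightarrow> nat \<Rightarrow> nat \<Rightarrow> (nat \<times> nat \<Rightarrow> int) \<Rightarrow> int" where
  "W P a b e = (\<Sum>n\<in>{a<..b}. \<Prod>p\<in>P. e (n + fst p, snd p))"

locale goodP =
  fixes P :: "(nat \<times> nat) set" and w s0 S :: nat
  assumes finP: "finite P" and top: "(w, s0) \<in> P"
    and below: "\<And>p. p \<in> P \<Longrightarrow> fst p \<le> w \<and> snd p \<in> {1..S}"
begin

lemma s0: "s0 \<in> {1..S}" using below[OF top] by simp

lemma W_flip:
  assumes "b + w < m"
  shows "W P a b (flip (m, s) e) = W P a b e"
  unfolding W_def
proof (intro sum.cong refl prod.cong)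
  fix n p assume "n \<in> {a<..b}" "p \<in> P"
  then have "n + fst p \<noteq> m" using below[of p] assms by auto
  thus "flip (m, s) e (n + fst p, snd p) = e (n + fst p, snd p)"
    by (simp add: flip_def)
qed

lemma mgf:
  fixes l :: real
  assumes "b + w \<le> N"
  shows "(\<Sum>e\<in>sign_families N S. exp (l * W P a b e)) = card (sign_families N S) * cosh l ^ (b - a)"
  using assms
proof (induction b)
  case 0
  then show ?case by (simp add: W_def)
next
  case (Suc b)
  show ?case
  proof (cases "Suc b \<le> a")
    case True
    then have "{a<..Suc b} = {}" by auto
    then show ?thesis using True by (simp add: W_def)
  next
    case False
    let ?q = "(Suc b + w, s0)"
    define g :: "(nat \<times> nat \<Rightarrow> int) \<Rightarrow> int" where "g e = (\<Prod>p\<in>P - {(w,s0)}. e (Suc b + fst p, snd p))" for e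
    have q: "?q \<in> {1..N} \<times> {1..S}" using Suc.prems s0 by auto
    have split: "W P a (Suc b) e = W P a b e + e ?q * g e" for e
    proof -
      have "{a<..Suc b} = insert (Suc b) {a<..b}" using False by auto
      moreover have "(\<Prod>p\<in>P. e (Suc b + fst p, snd p)) = e ?q * g e"
        unfolding g_def using top finP by (subst prod.remove[of _ "(w,s0)"]) auto
      ultimately show ?thesis unfolding W_def by simp
    qed
    have gi: "g (flip ?q e) = g e" for e
      unfolding g_def
    proof (intro prod.cong refl)
      fix p assume p: "p \<in> P - {(w, s0)}"
      have "(Suc b + fst p, snd p) \<noteq> ?q" using p by (cases p) auto
      thus "flip ?q e (Suc b + fst p, snd p) = e (Suc b + fst p, snd p)" unfolding flip_def by (rule fun_upd_other)
    qed
    have gv: "g e \<in> {-1,1}" if e: "e \<in> sign_families N S" for e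
      unfolding g_def
    proof (rule prod_pm1)
      show "finite (P - {(w, s0)})" using finP by simp
      fix p assume p: "p \<in> P - {(w, s0)}"
      have "(Suc b + fst p, snd p) \<in> {1..N} \<times> {1..S}" using below[of p] p Suc.prems by auto
      thus "e (Suc b + fst p, snd p) \<in> {-1,1}" using sf_val[OF e] by blast
    qed
    have phi: "exp (l * W P a b (flip ?q e)) = exp (l * W P a b e)" for e
      using W_flip[of b "Suc b + w" a s0 e] by simp
    have "(\<Sum>e\<in>sign_families N S. exp (l * W P a (Suc b) e))
        = (\<Sum>e\<in>sign_families N S. exp (l * W P a b e) * exp (l * of_int (e ?q * g e)))"
      by (simp add: split distrib_left exp_add del: of_int_mult)
    also have "\<dots> = cosh l * (\<Sum>e\<in>sign_families N S. exp (l * W P a b e))"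
      by (rule coord_lemma[where \<phi>="\<lambda>e. exp (l * W P a b e)" and g=g, OF q phi gi gv])
    also have "\<dots> = cosh l * (card (sign_families N S) * cosh l ^ (b - a))"
      using Suc by simp
    also have "\<dots> = card (sign_families N S) * cosh l ^ (Suc b - a)"
      using False by (simp add: Suc_diff_le)
    finally show ?thesis .
  qed
qed

end

context goodP begin

lemma chernoff1:
  fixes l v :: real
  assumes "b + w \<le> N"
  shows "real (card {e \<in> sign_families N S. v \<le> l * W P a b e}) \<le> card (sign_families N S) * exp (l^2 * real (b - a) / 2 - v)"
proof -
  let ?F = "sign_families N S"
  let ?X = "{e \<in> ?F. v \<le> l * W P a b e}"
  have fin: "finite ?F" by (rule finite_sf)
  have "real (card ?X) * exp v = (\<Sum>e\<in>?X. exp v)" by simp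
  also have "\<dots> \<le> (\<Sum>e\<in>?X. exp (l * W P a b e))"
    by (rule sum_mono) auto
  also have "\<dots> \<le> (\<Sum>e\<in>?F. exp (l * W P a b e))"
    by (rule sum_mono2[OF fin]) auto
  also have "\<dots> = card ?F * cosh l ^ (b - a)" by (rule mgf[OF assms])
  also have "\<dots> \<le> card ?F * exp (l^2/2) ^ (b - a)"
    by (intro mult_left_mono power_mono cosh_le_exp_sq) (auto simp: cosh_def intro: add_nonneg_nonneg)
  also have "exp (l^2/2) ^ (b - a) = exp (l^2 * (b - a) / 2)"
    by (simp add: exp_of_nat_mult[symmetric] algebra_simps)
  finally have "real (card ?X) * exp v \<le> card ?F * exp (l^2 * (b - a) / 2)" .
  hence "real (card ?X) \<le> card ?F * exp (l^2 * (b - a) / 2) / exp v"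
    by (simp add: field_simps)
  thus ?thesis by (simp add: exp_diff)
qed

lemma chernoff:
  fixes u :: real
  assumes "b + w \<le> N" "a < b" "u \<ge> 0"
  shows "real (card {e \<in> sign_families N S. u \<le> \<bar>W P a b e\<bar>}) \<le> 2 * card (sign_families N S) * exp (-(u^2) / (2 * real (b - a)))"
proof -
  let ?F = "sign_families N S"
  define n :: real where "n = real (b - a)"
  have n: "n > 0" using assms by (simp add: n_def)
  have nn: "real b - real a = n" using assms by (simp add: n_def)
  have sub: "{e \<in> ?F. u \<le> \<bar>W P a b e\<bar>} \<subseteq> {e \<in> ?F. u^2/n \<le> (u/n) * W P a b e} \<union> {e \<in> ?F. u^2/n \<le> (-u/n) * W P a b e}"
  proof
    fix e assume "e \<in> {e \<in> ?F. u \<le> \<bar>W P a b e\<bar>}"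
    then have e: "e \<in> ?F" "u \<le> \<bar>W P a b e\<bar>" by auto
    show "e \<in> {e \<in> ?F. u^2/n \<le> (u/n) * W P a b e} \<union> {e \<in> ?F. u^2/n \<le> (-u/n) * W P a b e}"
    proof (cases "W P a b e \<ge> 0")
      case True
      then have "u \<le> W P a b e" using e by simp
      hence "u * u \<le> u * W P a b e" using assms(3) by (intro mult_left_mono) auto
      hence "u*u/n \<le> (u * W P a b e)/n" using n by (intro divide_right_mono) auto
      hence "u^2/n \<le> (u/n) * W P a b e" by (simp add: power2_eq_square)
      thus ?thesis using e by auto
    next
      case False
      then have "u \<le> - W P a b e" using e by simp
      hence "u * u \<le> u * (- W P a b e)" using assms(3) by (intro mult_left_mono) auto
      hence "u*u/n \<le> (u * (- W P a b e))/n" using n by (intro divide_right_mono) auto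
      hence "u^2/n \<le> (-u/n) * W P a b e" by (simp add: power2_eq_square)
      thus ?thesis using e by auto
    qed
  qed
  have ex: "l^2 * n / 2 - u^2/n = -(u^2) / (2 * n)" if "l^2 = u^2/n^2" for l :: real
    using n that by (simp add: field_simps power2_eq_square)
  have c1: "real (card {e \<in> ?F. u^2/n \<le> (u/n) * W P a b e}) \<le> card ?F * exp (-(u^2) / (2 * n))"
    using chernoff1[OF assms(1), of "u^2/n" "u/n" a] ex[of "u/n"] by (simp add: power_divide n_def[symmetric])
  have c2: "real (card {e \<in> ?F. u^2/n \<le> (-u/n) * W P a b e}) \<le> card ?F * exp (-(u^2) / (2 * n))"
    using chernoff1[OF assms(1), of "u^2/n" "-u/n" a] ex[of "-u/n"] by (simp add: power_divide n_def[symmetric])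
  have "real (card {e \<in> ?F. u \<le> \<bar>W P a b e\<bar>}) \<le> real (card ({e \<in> ?F. u^2/n \<le> (u/n) * W P a b e} \<union> {e \<in> ?F. u^2/n \<le> (-u/n) * W P a b e}))"
    by (intro of_nat_mono card_mono[OF _ sub] finite_UnI; rule finite_subset[OF _ finite_sf]; blast)
  also have "\<dots> \<le> real (card {e \<in> ?F. u^2/n \<le> (u/n) * W P a b e}) + real (card {e \<in> ?F. u^2/n \<le> (-u/n) * W P a b e})"
    using of_nat_mono[OF card_Un_le[of "{e \<in> ?F. u^2/n \<le> (u/n) * W P a b e}" "{e \<in> ?F. u^2/n \<le> (-u/n) * W P a b e}"], where 'a=real] by simp
  also have "\<dots> \<le> 2 * card ?F * exp (-(u^2) / (2 * n))" using c1 c2 by simp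
  finally show ?thesis by (simp add: n_def)
qed

end

lemma W_split: "a \<le> c \<Longrightarrow> c \<le> b \<Longrightarrow> W P a b e = W P a c e + W P c b e"
proof -
  assume "a \<le> c" "c \<le> b"
  then have "{a<..b} = {a<..c} \<union> {c<..b}" "{a<..c} \<inter> {c<..b} = {}" by auto
  thus ?thesis unfolding W_def by (simp add: sum.union_disjoint)
qed

lemma W_same[simp]: "W P a a e = 0" by (simp add: W_def)

lemma grid_arith:
  fixes a b h :: nat
  assumes "h \<ge> 1"
  shows "a \<le> h * ((a + h - 1) div h)" "h * ((a + h - 1) div h) \<le> a + h - 1"
        "h * (b div h) \<le> b" "b < h * (b div h) + h"
proof -
  have d1: "h * ((a + h - 1) div h) + (a + h - 1) mod h = a + h - 1" by simp
  have m1: "(a + h - 1) mod h < h" using assms by simp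
  show "a \<le> h * ((a + h - 1) div h)" using d1 m1 assms by linarith
  show "h * ((a + h - 1) div h) \<le> a + h - 1" using d1 by linarith
  have d2: "h * (b div h) + b mod h = b" by simp
  have m2: "b mod h < h" using assms by simp
  show "h * (b div h) \<le> b" using d2 by linarith
  show "b < h * (b div h) + h" using d2 m2 by linarith
qed

lemma mult_gap: "(h::nat) * q2 < h * q1 \<Longrightarrow> h * q2 + h \<le> h * q1"
proof -
  assume "h * q2 < h * q1"
  then have "q2 < q1" by (simp add: mult_less_cancel1)
  then have "Suc q2 \<le> q1" by simp
  then have "h * Suc q2 \<le> h * q1" by (rule mult_le_mono2)
  thus ?thesis by simp
qed

lemma grid_reduce:
  fixes T \<eta> :: real and h L :: nat
  assumes h: "h \<ge> 1" and T: "T > 0" and eta: "0 < \<eta>" "\<eta> < 1"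
    and ab: "a < b" "b \<le> L" and big: "T < \<bar>W P a b e\<bar>"
  shows "(\<exists>a' b'. a' \<in> (\<lambda>j. h * j) ` {0..L div h} \<and> b' \<in> (\<lambda>j. h * j) ` {0..L div h} \<and> a' < b'
            \<and> (1 - \<eta>) * T \<le> \<bar>W P a' b' e\<bar>)
       \<or> (\<exists>a' b'. a' < b' \<and> b' \<le> L \<and> b' - a' < h \<and> \<eta> * T / 2 \<le> \<bar>W P a' b' e\<bar>)"
proof -
  define q1 where "q1 = (a + h - 1) div h"
  define q2 where "q2 = b div h"
  note g = grid_arith(1)[where a=a, OF h, folded q1_def] grid_arith(2)[where a=a, OF h, folded q1_def] grid_arith(3)[where b=b, OF h, folded q2_def] grid_arith(4)[where b=b, OF h, folded q2_def]
  show ?thesis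
  proof (cases "h * q1 \<le> h * q2")
    case True
    let ?a = "h * q1" and ?b = "h * q2"
    have inG: "?a \<in> (\<lambda>j. h * j) ` {0..L div h}" "?b \<in> (\<lambda>j. h * j) ` {0..L div h}"
    proof -
      have "h * q2 \<le> L" using g ab by linarith
      hence "q2 \<le> L div h" using h by (metis div_le_mono nonzero_mult_div_cancel_left not_one_le_zero)
      moreover have "q1 \<le> q2" using True h by (simp add: mult_le_cancel1)
      ultimately show "?a \<in> (\<lambda>j. h * j) ` {0..L div h}" "?b \<in> (\<lambda>j. h * j) ` {0..L div h}" by auto
    qed
    have sp: "W P a b e = W P a ?a e + W P ?a ?b e + W P ?b b e"
      using W_split[of a ?a b P e] W_split[of ?a ?b b P e] g True by simp
    have "(1 - \<eta>) * T \<le> \<bar>W P ?a ?b e\<bar> \<or> \<eta> * T / 2 \<le> \<bar>W P a ?a e\<bar> \<or> \<eta> * T / 2 \<le> \<bar>W P ?b b e\<bar>"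
    proof (rule ccontr)
      assume "\<not> ?thesis"
      hence "\<bar>real_of_int (W P a b e)\<bar> < \<eta> * T / 2 + (1 - \<eta>) * T + \<eta> * T / 2"
        using sp by linarith
      thus False using big by (simp add: algebra_simps)
    qed
    thus ?thesis
    proof (elim disjE)
      assume A: "(1 - \<eta>) * T \<le> \<bar>W P ?a ?b e\<bar>"
      have "?a \<noteq> ?b"
      proof
        assume "?a = ?b"
        then have "W P ?a ?b e = 0" by (simp only: W_same)
        moreover have "(1 - \<eta>) * T > 0" using T eta by simp
        ultimately show False using A by simp
      qed
      hence "?a < ?b" using True by simp
      thus ?thesis using A inG by blast
    next
      assume A: "\<eta> * T / 2 \<le> \<bar>W P a ?a e\<bar>"
      have "a \<noteq> ?a" proof assume "a = ?a" then show False using A T eta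
          by (metis W_same abs_zero divide_pos_pos mult_pos_pos not_le of_int_0 zero_less_numeral) qed
      hence "a < ?a" using g by simp
      moreover have "?a \<le> L" using g ab True by linarith
      moreover have "?a - a < h" using g h by linarith
      ultimately show ?thesis using A by blast
    next
      assume A: "\<eta> * T / 2 \<le> \<bar>W P ?b b e\<bar>"
      have "?b \<noteq> b" proof assume "?b = b" then show False using A T eta
          by (metis W_same abs_zero divide_pos_pos mult_pos_pos not_le of_int_0 zero_less_numeral) qed
      hence "?b < b" using g by simp
      moreover have "b - ?b < h" using g h by linarith
      ultimately show ?thesis using A ab by blast
    qed
  next
    case False
    hence "h * q2 + h \<le> h * q1" using mult_gap by simp
    hence "b - a < h" using g by linarith
    moreover have "\<eta> * T / 2 \<le> \<bar>W P a b e\<bar>"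
    proof -
      have "\<eta> * T / 2 \<le> T" using eta T by (simp add: mult_le_cancel_right1)
      thus ?thesis using big by linarith
    qed
    ultimately show ?thesis using ab by blast
  qed
qed


lemma exp_len_mono:
  fixes x y u :: real
  assumes "0 < x" "x \<le> y"
  shows "exp (-(u^2) / (2 * x)) \<le> exp (-(u^2) / (2 * y))"
proof -
  have "u^2 / (2 * y) \<le> u^2 / (2 * x)"
    using assms by (intro divide_left_mono) auto
  thus ?thesis by simp
qed

context goodP begin

lemma bad_P_bound:
  fixes T \<eta> :: real and h :: nat
  assumes h: "h \<ge> 1" and T: "T > 0" and eta: "0 < \<eta>" "\<eta> < 1"
  shows "real (card {e \<in> sign_families N S. \<exists>a b. a < b \<and> b \<le> N - w \<and> T < \<bar>W P a b e\<bar>})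
    \<le> 2 * card (sign_families N S) * ((real ((N - w) div h) + 1)^2 * exp (-(((1 - \<eta>) * T)^2) / (2 * N))
        + (real (N - w) + 1)^2 * exp (-((\<eta> * T / 2)^2) / (2 * h)))"
proof -
  let ?F = "sign_families N S"
  define L where "L = N - w"
  define G where "G = (\<lambda>j. h * j) ` {0..L div h}"
  define Gp where "Gp = {p \<in> G \<times> G. fst p < snd p}"
  define Sp where "Sp = {p \<in> {0..L} \<times> {0..L}. fst p < snd p \<and> snd p - fst p < h}"
  define E where "E u p = {e \<in> ?F. u \<le> \<bar>real_of_int (W P (fst p) (snd p) e)\<bar>}" for u :: real and p :: "nat \<times> nat"
  define cF where "cF = real (card ?F)"
  define u1 where "u1 = (1 - \<eta>) * T"
  define u2 where "u2 = \<eta> * T / 2"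
  have u1: "u1 \<ge> 0" and u2: "u2 \<ge> 0" using T eta by (auto simp: u1_def u2_def)
  have finG: "finite G" by (simp add: G_def)
  have finGp: "finite Gp" unfolding Gp_def using finG by simp
  have finSp: "finite Sp" unfolding Sp_def by simp
  have GL: "x \<le> L" if xG: "x \<in> G" for x
  proof -
    obtain j where j: "j \<le> L div h" "x = h * j" using xG unfolding G_def by auto
    have "h * j \<le> h * (L div h)" using j by simp
    also have "\<dots> \<le> L" by simp
    finally show ?thesis using j by simp
  qed
  have sub: "{e \<in> ?F. \<exists>a b. a < b \<and> b \<le> N - w \<and> T < \<bar>W P a b e\<bar>} \<subseteq> (\<Union>p\<in>Gp. E u1 p) \<union> (\<Union>p\<in>Sp. E u2 p)"
  proof
    fix e assume "e \<in> {e \<in> ?F. \<exists>a b. a < b \<and> b \<le> N - w \<and> T < \<bar>W P a b e\<bar>}"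
    then obtain a b where e: "e \<in> ?F" and ab: "a < b" "b \<le> L" and big: "T < \<bar>W P a b e\<bar>"
      by (auto simp: L_def)
    from grid_reduce[OF h T eta ab big]
    show "e \<in> (\<Union>p\<in>Gp. E u1 p) \<union> (\<Union>p\<in>Sp. E u2 p)"
    proof (elim disjE exE conjE)
      fix a' b' assume "a' \<in> (\<lambda>j. h * j) ` {0..L div h}" "b' \<in> (\<lambda>j. h * j) ` {0..L div h}" "a' < b'"
        "(1 - \<eta>) * T \<le> \<bar>W P a' b' e\<bar>"
      then have "(a', b') \<in> Gp" "e \<in> E u1 (a', b')" using e by (auto simp: Gp_def G_def E_def u1_def)
      thus ?thesis by blast
    next
      fix a' b' assume "a' < b'" "b' \<le> L" "b' - a' < h" "\<eta> * T / 2 \<le> \<bar>W P a' b' e\<bar>"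
      then have "(a', b') \<in> Sp" "e \<in> E u2 (a', b')" using e by (auto simp: Sp_def E_def u2_def)
      thus ?thesis by blast
    qed
  qed
  have finE: "finite (E u p)" for u p unfolding E_def using finite_sf by simp
  have c1: "real (card (E u1 p)) \<le> 2 * cF * exp (-(u1^2) / (2 * N))" if pG: "p \<in> Gp" for p
  proof -
    obtain a b where p: "p = (a, b)" "a < b" "a \<in> G" "b \<in> G" using pG by (cases p) (auto simp: Gp_def)
    have bL: "b \<le> L" using GL p by simp
    have "real (card (E u1 p)) \<le> 2 * cF * exp (-(u1^2) / (2 * real (b - a)))"
      unfolding E_def cF_def p using chernoff[where a=a and b=b and u=u1 and N=N] bL p(2) u1 by (simp add: L_def)
    also have "\<dots> \<le> 2 * cF * exp (-(u1^2) / (2 * N))"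
    proof -
      have "exp (-(u1^2) / (2 * real (b - a))) \<le> exp (-(u1^2) / (2 * real N))"
        by (rule exp_len_mono) (use bL p in \<open>auto simp: L_def\<close>)
      thus ?thesis by (intro mult_left_mono) (auto simp: cF_def)
    qed
    finally show ?thesis .
  qed
  have c2: "real (card (E u2 p)) \<le> 2 * cF * exp (-(u2^2) / (2 * h))" if pS: "p \<in> Sp" for p
  proof -
    obtain a b where p: "p = (a, b)" "a < b" "b \<le> L" "b - a < h" using pS by (cases p) (auto simp: Sp_def)
    have "real (card (E u2 p)) \<le> 2 * cF * exp (-(u2^2) / (2 * real (b - a)))"
      unfolding E_def cF_def p using chernoff[where a=a and b=b and u=u2 and N=N] p u2 by (simp add: L_def)
    also have "\<dots> \<le> 2 * cF * exp (-(u2^2) / (2 * h))"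
    proof -
      have "exp (-(u2^2) / (2 * real (b - a))) \<le> exp (-(u2^2) / (2 * real h))"
        by (rule exp_len_mono) (use p in auto)
      thus ?thesis by (intro mult_left_mono) (auto simp: cF_def)
    qed
    finally show ?thesis .
  qed
  have cardG: "card G \<le> L div h + 1" unfolding G_def using card_image_le[of "{0..L div h}" "\<lambda>j. h * j"] by simp
  have cardGp: "real (card Gp) \<le> (real (L div h) + 1)^2"
  proof -
    have "card Gp \<le> card (G \<times> G)" unfolding Gp_def using finG by (intro card_mono) auto
    also have "\<dots> = card G * card G" by (simp add: card_cartesian_product)
    also have "\<dots> \<le> (L div h + 1) * (L div h + 1)" using cardG by (intro mult_le_mono) auto
    finally have "card Gp \<le> (L div h + 1) * (L div h + 1)" .
    hence "real (card Gp) \<le> real ((L div h + 1) * (L div h + 1))" by (rule of_nat_mono)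
    thus ?thesis by (simp add: power2_eq_square algebra_simps)
  qed
  have cardSp: "real (card Sp) \<le> (real L + 1)^2"
  proof -
    have "card Sp \<le> card ({0..L} \<times> {0..L})" unfolding Sp_def by (intro card_mono) auto
    also have "\<dots> = (L + 1) * (L + 1)" by (simp add: card_cartesian_product)
    finally have "card Sp \<le> (L + 1) * (L + 1)" .
    hence "real (card Sp) \<le> real ((L + 1) * (L + 1))" by (rule of_nat_mono)
    thus ?thesis by (simp add: power2_eq_square algebra_simps)
  qed
  have "real (card {e \<in> ?F. \<exists>a b. a < b \<and> b \<le> N - w \<and> T < \<bar>W P a b e\<bar>})
      \<le> real (card ((\<Union>p\<in>Gp. E u1 p) \<union> (\<Union>p\<in>Sp. E u2 p)))"
    by (intro of_nat_mono card_mono[OF _ sub] finite_UnI finite_UN_I finE finGp finSp)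
  also have "\<dots> \<le> real (card (\<Union>p\<in>Gp. E u1 p)) + real (card (\<Union>p\<in>Sp. E u2 p))"
    using of_nat_mono[OF card_Un_le[of "\<Union>p\<in>Gp. E u1 p" "\<Union>p\<in>Sp. E u2 p"], where 'a=real] by simp
  also have "\<dots> \<le> (\<Sum>p\<in>Gp. real (card (E u1 p))) + (\<Sum>p\<in>Sp. real (card (E u2 p)))"
  proof (intro add_mono)
    show "real (card (\<Union>p\<in>Gp. E u1 p)) \<le> (\<Sum>p\<in>Gp. real (card (E u1 p)))"
      using of_nat_mono[OF card_UN_le[OF finGp, of "E u1"], where 'a=real] by simp
    show "real (card (\<Union>p\<in>Sp. E u2 p)) \<le> (\<Sum>p\<in>Sp. real (card (E u2 p)))"
      using of_nat_mono[OF card_UN_le[OF finSp, of "E u2"], where 'a=real] by simp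
  qed
  also have "\<dots> \<le> real (card Gp) * (2 * cF * exp (-(u1^2) / (2 * N))) + real (card Sp) * (2 * cF * exp (-(u2^2) / (2 * h)))"
    by (intro add_mono sum_bounded_above c1 c2)
  also have "\<dots> \<le> (real (L div h) + 1)^2 * (2 * cF * exp (-(u1^2) / (2 * N))) + (real L + 1)^2 * (2 * cF * exp (-(u2^2) / (2 * h)))"
    by (intro add_mono mult_right_mono cardGp cardSp) (auto simp: cF_def)
  finally show ?thesis by (simp add: L_def u1_def u2_def cF_def algebra_simps)
qed

end

definition Pk :: "nat \<Rightarrow> nat \<Rightarrow> nat \<Rightarrow> (nat \<times> nat) set set" where
  "Pk N S k = {P. P \<subseteq> {0..<N} \<times> {1..S} \<and> card P = k \<and> (\<exists>s. (0, s) \<in> P)}"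

lemma card_Pk:
  "card (Pk N S k) = (S * N choose k) - (S * (N - 1) choose k)"
  "S * (N - 1) choose k \<le> S * N choose k"
proof -
  let ?U = "{0..<N} \<times> {1..S}" and ?U' = "{1..<N} \<times> {1..S}"
  have e: "Pk N S k = {P. P \<subseteq> ?U \<and> card P = k} - {P. P \<subseteq> ?U' \<and> card P = k}"
  proof -
    have iff: "(\<exists>s. (0,s) \<in> P) \<longleftrightarrow> \<not> P \<subseteq> ?U'" if PU: "P \<subseteq> ?U" for P
    proof
      assume "\<exists>s. (0,s) \<in> P" thus "\<not> P \<subseteq> ?U'" by auto
    next
      assume "\<not> P \<subseteq> ?U'" then obtain x where x: "x \<in> P" "x \<notin> ?U'" by blast
      with PU have "fst x = 0" by (cases x) auto
      thus "\<exists>s. (0,s) \<in> P" using x by (cases x) auto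
    qed
    show ?thesis unfolding Pk_def using iff by blast
  qed
  have sub: "{P. P \<subseteq> ?U' \<and> card P = k} \<subseteq> {P. P \<subseteq> ?U \<and> card P = k}" by auto
  have fin: "finite {P. P \<subseteq> ?U' \<and> card P = k}"
    by (rule finite_subset[of _ "Pow ?U'"]) auto
  have c1: "card {P. P \<subseteq> ?U \<and> card P = k} = S * N choose k"
    by (subst n_subsets) (auto simp: card_cartesian_product mult.commute)
  have c2: "card {P. P \<subseteq> ?U' \<and> card P = k} = S * (N - 1) choose k"
    by (subst n_subsets) (auto simp: card_cartesian_product mult.commute)
  have finU: "finite {P. P \<subseteq> ?U \<and> card P = k}"
    by (rule finite_subset[of _ "Pow ?U"]) auto
  show "card (Pk N S k) = (S * N choose k) - (S * (N - 1) choose k)"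
    unfolding e using card_Diff_subset[OF fin sub] c1 c2 by simp
  show "S * (N - 1) choose k \<le> S * N choose k"
    using card_mono[OF finU sub] c1 c2 by simp
qed

lemma finite_Pk: "finite (Pk N S k)"
  by (rule finite_subset[of _ "Pow ({0..<N} \<times> {1..S})"]) (auto simp: Pk_def)

lemma Pk_good:
  assumes "P \<in> Pk N S k" "k \<ge> 1"
  shows "\<exists>s0. goodP P (Max (fst ` P)) s0 S" "Max (fst ` P) < N"
proof -
  have P: "P \<subseteq> {0..<N} \<times> {1..S}" "card P = k" using assms by (auto simp: Pk_def)
  have fin: "finite P" by (rule finite_subset[OF P(1)]) auto
  have ne: "P \<noteq> {}" using P(2) assms(2) by auto
  have "Max (fst ` P) \<in> fst ` P" using fin ne by (intro Max_in) auto
  then obtain s0 where top: "(Max (fst ` P), s0) \<in> P" by force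
  show "\<exists>s0. goodP P (Max (fst ` P)) s0 S"
  proof (intro exI[of _ s0])
    show "goodP P (Max (fst ` P)) s0 S"
      unfolding goodP_def using fin top P(1) by (auto intro: Max_ge)
  qed
  show "Max (fst ` P) < N" using top P(1) by auto
qed

lemma Phi_set_eq:
  "{\<bar>\<Sum>n=1..M. \<Prod>i=1..k. e (n + d i, s i)\<bar> | M d s. admissible k N S M d s}
   = (\<lambda>(M, d, s). \<bar>\<Sum>n=1..M. \<Prod>i=1..k. e (n + d i, s i)\<bar>) ` {(M, d, s). admissible k N S M d s}"
proof (rule set_eqI, rule iffI)
  fix v assume "v \<in> {\<bar>\<Sum>n=1..M. \<Prod>i=1..k. e (n + d i, s i)\<bar> | M d s. admissible k N S M d s}"
  then obtain M d s where "v = \<bar>\<Sum>n=1..M. \<Prod>i=1..k. e (n + d i, s i)\<bar>" "admissible k N S M d s" by blast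
  thus "v \<in> (\<lambda>(M, d, s). \<bar>\<Sum>n=1..M. \<Prod>i=1..k. e (n + d i, s i)\<bar>) ` {(M, d, s). admissible k N S M d s}"
    by (intro image_eqI[where x="(M, d, s)"]) auto
qed auto

lemma adm_fin: "finite {(M, d, s). admissible k N S M d s}"
proof (rule finite_subset)
  show "{(M, d, s). admissible k N S M d s} \<subseteq> {1..N} \<times> ({1..k} \<rightarrow>\<^sub>E {0..N}) \<times> ({1..k} \<rightarrow>\<^sub>E {1..S})"
    unfolding admissible_def by auto
  show "finite ({1..N} \<times> ({1..k} \<rightarrow>\<^sub>E {0..N}) \<times> ({1..k} \<rightarrow>\<^sub>E {1..S}))"
    by (intro finite_cartesian_product finite_PiE) auto
qed

lemma adm_nonempty:
  assumes "1 \<le> k" "k < S * N"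
  shows "admissible k N S 1 (restrict (\<lambda>i. (i - 1) div S) {1..k}) (restrict (\<lambda>i. (i - 1) mod S + 1) {1..k})"
proof -
  have S: "S > 0" using assms by (cases S) auto
  have kd: "(k - 1) div S < N" using assms S by (simp add: less_mult_imp_div_less mult.commute)
  have dle: "(i - 1) div S \<le> (k - 1) div S" if "i \<le> k" for i using that by (intro div_le_mono) simp
  show ?thesis unfolding admissible_def
  proof (intro conjI)
    show "restrict (\<lambda>i. (i - 1) div S) {1..k} \<in> {1..k} \<rightarrow>\<^sub>E {0..N}"
      using dle kd by (auto simp: PiE_iff) (meson le_trans less_imp_le_nat)
    show "restrict (\<lambda>i. (i - 1) mod S + 1) {1..k} \<in> {1..k} \<rightarrow>\<^sub>E {1..S}"
      using S by (auto simp: PiE_iff Suc_le_eq)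
    show "1 \<in> {1..N}" using kd by auto
    show "\<forall>i j. 1 \<le> i \<and> i \<le> j \<and> j \<le> k \<longrightarrow> restrict (\<lambda>i. (i - 1) div S) {1..k} i \<le> restrict (\<lambda>i. (i - 1) div S) {1..k} j"
      by (auto intro: div_le_mono)
    show "restrict (\<lambda>i. (i - 1) div S) {1..k} k < 1 + restrict (\<lambda>i. (i - 1) div S) {1..k} k" by simp
    show "1 + restrict (\<lambda>i. (i - 1) div S) {1..k} k \<le> N" using kd assms by simp
    show "\<forall>i\<in>{1..k}. \<forall>j\<in>{1..k}. i \<noteq> j \<and> restrict (\<lambda>i. (i - 1) mod S + 1) {1..k} i = restrict (\<lambda>i. (i - 1) mod S + 1) {1..k} j \<longrightarrow>
        restrict (\<lambda>i. (i - 1) div S) {1..k} i \<noteq> restrict (\<lambda>i. (i - 1) div S) {1..k} j"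
    proof (intro ballI impI)
      fix i j assume ij: "i \<in> {1..k}" "j \<in> {1..k}" "i \<noteq> j \<and> restrict (\<lambda>i. (i - 1) mod S + 1) {1..k} i = restrict (\<lambda>i. (i - 1) mod S + 1) {1..k} j"
      show "restrict (\<lambda>i. (i - 1) div S) {1..k} i \<noteq> restrict (\<lambda>i. (i - 1) div S) {1..k} j"
      proof
        assume "restrict (\<lambda>i. (i - 1) div S) {1..k} i = restrict (\<lambda>i. (i - 1) div S) {1..k} j"
        hence "(i - 1) div S = (j - 1) div S" "(i - 1) mod S = (j - 1) mod S" using ij by auto
        hence "i - 1 = j - 1" by (metis div_mult_mod_eq)
        thus False using ij by auto
      qed
    qed
  qed
qed


lemma Phi_reduce:
  fixes T :: real
  assumes k: "2 \<le> k" "k < S * N" and lt: "T < real_of_int (Phi k N S e)"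
  shows "\<exists>P\<in>Pk N S k. \<exists>a b. a < b \<and> b \<le> N - Max (fst ` P) \<and> T < \<bar>W P a b e\<bar>"
proof -
  define V where "V = {\<bar>\<Sum>n=1..M. \<Prod>i=1..k. e (n + d i, s i)\<bar> | M d s. admissible k N S M d s}"
  have finV: "finite V" unfolding V_def Phi_set_eq by (intro finite_imageI adm_fin)
  have neV: "V \<noteq> {}" unfolding V_def using adm_nonempty[of k S N] k by auto
  have "Phi k N S e \<in> V" unfolding Phi_def V_def[symmetric] using finV neV by (rule Max_in)
  then obtain M d s where adm: "admissible k N S M d s"
    and big: "T < \<bar>\<Sum>n=1..M. \<Prod>i=1..k. e (n + d i, s i)\<bar>"
    using lt unfolding V_def by auto
  have dP: "d \<in> {1..k} \<rightarrow>\<^sub>E {0..N}" and sP: "s \<in> {1..k} \<rightarrow>\<^sub>E {1..S}" and M: "M \<in> {1..N}"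
    and mono: "\<And>i j. 1 \<le> i \<Longrightarrow> i \<le> j \<Longrightarrow> j \<le> k \<Longrightarrow> d i \<le> d j"
    and Mk: "M + d k \<le> N"
    and dist: "\<And>i j. i \<in> {1..k} \<Longrightarrow> j \<in> {1..k} \<Longrightarrow> i \<noteq> j \<Longrightarrow> s i = s j \<Longrightarrow> d i \<noteq> d j"
    using adm unfolding admissible_def by blast+
  have k1: "1 \<le> k" using k by simp
  have d1: "d 1 \<le> d i" if "i \<in> {1..k}" for i using mono[of 1 i] that by auto
  have dk: "d i \<le> d k" if "i \<in> {1..k}" for i using mono[of i k] that by auto
  define f where "f i = (d i - d 1, s i)" for i
  define P where "P = f ` {1..k}"
  have inj: "inj_on f {1..k}"
  proof (rule inj_onI)
    fix i j assume ij: "i \<in> {1..k}" "j \<in> {1..k}" "f i = f j"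
    hence "d i = d j" "s i = s j" using d1[OF ij(1)] d1[OF ij(2)] by (auto simp: f_def)
    thus "i = j" using dist ij by blast
  qed
  have cardP: "card P = k" unfolding P_def using card_image[OF inj] by simp
  have sub: "P \<subseteq> {0..<N} \<times> {1..S}"
  proof
    fix p assume "p \<in> P"
    then obtain i where i: "i \<in> {1..k}" "p = f i" by (auto simp: P_def)
    have "d i - d 1 < N" using dk[OF i(1)] Mk M by auto
    moreover have "s i \<in> {1..S}" using sP i(1) by auto
    ultimately show "p \<in> {0..<N} \<times> {1..S}" using i by (auto simp: f_def)
  qed
  have zero: "(0, s 1) \<in> P" unfolding P_def f_def using k1 by (auto intro!: image_eqI[where x=1])
  have PPk: "P \<in> Pk N S k" unfolding Pk_def using sub cardP zero by blast
  have maxP: "Max (fst ` P) = d k - d 1"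
  proof (rule Max_eqI)
    show "finite (fst ` P)" unfolding P_def by simp
    show "y \<le> d k - d 1" if yP: "y \<in> fst ` P" for y
    proof -
      obtain i where i: "i \<in> {1..k}" "y = d i - d 1" using yP unfolding P_def f_def by auto
      show ?thesis using dk[OF i(1)] i(2) by (simp add: diff_le_mono)
    qed
    show "d k - d 1 \<in> fst ` P" unfolding P_def f_def using k1 by force
  qed
  define a where "a = d 1"
  define b where "b = d 1 + M"
  have ab: "a < b" using M by (simp add: a_def b_def)
  have bN: "b \<le> N - Max (fst ` P)" unfolding maxP a_def b_def using Mk d1[of k] k1 by auto
  have "W P a b e = (\<Sum>n=1..M. \<Prod>i=1..k. e (n + d i, s i))"
  proof -
    have "W P a b e = (\<Sum>n\<in>{a<..b}. \<Prod>i\<in>{1..k}. e (n + fst (f i), snd (f i)))"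
      unfolding W_def P_def by (intro sum.cong refl) (rule prod.reindex[OF inj, unfolded comp_def])
    also have "{a<..b} = (\<lambda>m. m + d 1) ` {1..M}"
    proof -
      have "x \<in> (\<lambda>m. m + d 1) ` {1..M}" if "x \<in> {a<..b}" for x
        using that by (intro image_eqI[where x="x - d 1"]) (auto simp: a_def b_def)
      thus ?thesis by (auto simp: a_def b_def)
    qed
    also have "(\<Sum>n\<in>(\<lambda>m. m + d 1) ` {1..M}. \<Prod>i\<in>{1..k}. e (n + fst (f i), snd (f i)))
        = (\<Sum>m\<in>{1..M}. \<Prod>i\<in>{1..k}. e (m + d 1 + fst (f i), snd (f i)))"
      by (subst sum.reindex) (auto simp: inj_on_def)
    also have "\<dots> = (\<Sum>n=1..M. \<Prod>i=1..k. e (n + d i, s i))"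
    proof (intro sum.cong refl prod.cong)
      fix m i assume "i \<in> {1..k}"
      then have "m + d 1 + fst (f i) = m + d i" using d1 by (auto simp: f_def)
      thus "e (m + d 1 + fst (f i), snd (f i)) = e (m + d i, s i)" by (simp add: f_def)
    qed
    finally show ?thesis .
  qed
  thus ?thesis using PPk ab bN big by metis
qed


lemma binom_unimodal:
  assumes "r \<le> j" "j \<le> m - r"
  shows "m choose r \<le> m choose j"
proof (cases "2 * j \<le> m")
  case True thus ?thesis using binomial_mono[OF assms(1)] by simp
next
  case False
  have jm: "j \<le> m" using assms(2) by simp
  have "m choose j = m choose (m - j)" by (rule binomial_symmetric[OF jm])
  moreover have "m choose r \<le> m choose (m - j)"
    using assms False by (intro binomial_mono) auto
  ultimately show ?thesis by simp
qed

lemma binom_ge_m: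
  assumes "1 \<le> j" "j \<le> m - 1"
  shows "m \<le> m choose j"
  using binom_unimodal[of 1 j m] assms by simp

lemma binom_sum_bound:
  fixes \<delta> :: real and r m :: nat
  assumes d: "\<delta> > 0" and r: "r \<ge> 1" and m: "2 * r \<le> m"
  shows "(\<Sum>j\<in>{1..m-1}. real (m choose j) powr (-\<delta>))
         \<le> 2 * (real r - 1) * real m powr (-\<delta>) + real m * (real m / real r) powr (- (real r * \<delta>))"
proof -
  define J1 where "J1 = {j \<in> {1..m-1}. j < r \<or> m - r < j}"
  define J2 where "J2 = {j \<in> {1..m-1}. r \<le> j \<and> j \<le> m - r}"
  have un: "{1..m-1} = J1 \<union> J2" "J1 \<inter> J2 = {}" by (auto simp: J1_def J2_def)
  have fin: "finite J1" "finite J2" by (auto simp: J1_def J2_def)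
  have mpos: "real m > 0" using m r by simp
  have b1: "real (m choose j) powr (-\<delta>) \<le> real m powr (-\<delta>)" if "j \<in> J1" for j
  proof -
    have "m \<le> m choose j" using that by (intro binom_ge_m) (auto simp: J1_def)
    thus ?thesis using mpos d by (intro powr_mono2') auto
  qed
  have b2: "real (m choose j) powr (-\<delta>) \<le> (real m / real r) powr (- (real r * \<delta>))" if "j \<in> J2" for j
  proof -
    have "(real m / real r) ^ r \<le> real (m choose r)"
      using m by (intro binomial_ge_n_over_k_pow_k) simp
    also have "\<dots> \<le> real (m choose j)" using that by (auto simp: J2_def intro: binom_unimodal)
    finally have le: "(real m / real r) ^ r \<le> real (m choose j)" .
    have pos: "(real m / real r) ^ r > 0" using mpos r by simp
    have "real (m choose j) powr (-\<delta>) \<le> ((real m / real r) ^ r) powr (-\<delta>)"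
      using le pos d by (intro powr_mono2') auto
    also have "((real m / real r) ^ r) powr (-\<delta>) = (real m / real r) powr (- (real r * \<delta>))"
      using mpos r by (simp add: powr_realpow[symmetric] powr_powr)
    finally show ?thesis .
  qed
  have c1: "card J1 \<le> 2 * (r - 1)"
  proof -
    have "J1 \<subseteq> {1..<r} \<union> {m - r<..<m}" by (auto simp: J1_def)
    hence "card J1 \<le> card ({1..<r} \<union> {m - r<..<m})" by (intro card_mono) auto
    also have "\<dots> \<le> card {1..<r} + card {m - r<..<m}" by (rule card_Un_le)
    also have "\<dots> \<le> 2 * (r - 1)" using m r by simp
    finally show ?thesis .
  qed
  have c2: "card J2 \<le> m"
  proof -
    have "card J2 \<le> card {1..m-1}" by (intro card_mono) (auto simp: J2_def)
    thus ?thesis by simp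
  qed
  have "(\<Sum>j\<in>{1..m-1}. real (m choose j) powr (-\<delta>))
      = (\<Sum>j\<in>J1. real (m choose j) powr (-\<delta>)) + (\<Sum>j\<in>J2. real (m choose j) powr (-\<delta>))"
    unfolding un(1) by (rule sum.union_disjoint[OF fin un(2)])
  also have "\<dots> \<le> real (card J1) * real m powr (-\<delta>) + real (card J2) * (real m / real r) powr (- (real r * \<delta>))"
    by (intro add_mono sum_bounded_above b1 b2)
  also have "\<dots> \<le> 2 * (real r - 1) * real m powr (-\<delta>) + real m * (real m / real r) powr (- (real r * \<delta>))"
  proof (intro add_mono mult_right_mono)
    show "real (card J1) \<le> 2 * (real r - 1)" using c1 r by (simp add: of_nat_diff)
    show "real (card J2) \<le> real m" using c2 by simp
  qed auto
  finally show ?thesis .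
qed


lemma h_bounds:
  fixes N K :: nat
  assumes K: "K \<ge> 1" and NK: "N \<ge> K"
  shows "N div (N div K + 1) \<le> K" "real (N div K + 1) \<le> 2 * real N / real K"
proof -
  have "N < K * (N div K + 1)"
  proof -
    have e: "K * (N div K) + N mod K = N" by (rule mult_div_mod_eq)
    have m: "N mod K < K" using K by simp
    have "N < K * (N div K) + K" using e m by linarith
    thus ?thesis by (simp add: algebra_simps)
  qed
  hence "N div (N div K + 1) < K" by (intro less_mult_imp_div_less) (simp add: mult.commute)
  thus "N div (N div K + 1) \<le> K" by simp
  have "real K * real (N div K) \<le> real N"
    by (metis div_mult_mod_eq le_add1 mult.commute of_nat_le_iff of_nat_mult)
  hence "real (N div K) \<le> real N / real K" using K by (simp add: field_simps)
  moreover have "1 \<le> real N / real K" using K NK by (simp add: field_simps)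
  ultimately show "real (N div K + 1) \<le> 2 * real N / real K" by simp
qed

lemma exp_to_powr: "(A::real) > 0 \<Longrightarrow> exp (- (c * ln A)) = A powr (- c)"
  by (auto simp: powr_def)

lemma kbound:
  fixes S N k K :: nat and \<epsilon> \<eta> T A :: real
  assumes S: "S > 0" and eps: "\<epsilon> > 0" and eta: "0 < \<eta>" "\<eta> < 1"
    and K: "K \<ge> 1" "32 \<le> \<eta>^2 * K" and NK: "N \<ge> K"
    and k: "2 \<le> k" "k < S * N"
    and A: "A = real ((S * N) choose k) - real ((S * (N - 1)) choose k)"
    and T: "T = (1 + \<epsilon>) * sqrt (2 * real N * ln A)"
  shows "real (card {e \<in> sign_families N S. \<exists>P\<in>Pk N S k. \<exists>a b. a < b \<and> b \<le> N - Max (fst ` P) \<and> T < \<bar>W P a b e\<bar>})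
    \<le> card (sign_families N S) * (A * (2 * ((real K + 1)^2 * A powr (- (((1 - \<eta>) * (1 + \<epsilon>))^2)) + (real N + 1)^2 * A powr (-4))))"
proof -
  let ?F = "sign_families N S"
  define h where "h = N div K + 1"
  define bad where "bad P = {e \<in> ?F. \<exists>a b. a < b \<and> b \<le> N - Max (fst ` P) \<and> T < \<bar>W P a b e\<bar>}" for P
  define \<beta> where "\<beta> = 2 * ((real K + 1)^2 * A powr (- (((1 - \<eta>) * (1 + \<epsilon>))^2)) + (real N + 1)^2 * A powr (-4))"
  have cardPk: "real (card (Pk N S k)) = A"
  proof -
    have le: "S * (N - 1) choose k \<le> S * N choose k" by (rule card_Pk(2))
    have "real (card (Pk N S k)) = real ((S * N choose k) - (S * (N - 1) choose k))"
      by (simp only: card_Pk(1))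
    also have "\<dots> = A" unfolding A by (rule of_nat_diff[OF le])
    finally show ?thesis .
  qed
  have N1: "N \<ge> 1" using k by (cases N) auto
  have Abig: "A \<ge> real (S * N - 1)"
  proof -
    have "S * (N - 1) \<le> S * N - 1" using S N1 by (simp add: algebra_simps)
    hence "S * (N - 1) choose k \<le> (S * N - 1) choose k" by (rule binomial_right_mono)
    moreover have "S * N choose k = ((S * N - 1) choose k) + ((S * N - 1) choose (k - 1))"
    proof -
      have e1: "S * N = Suc (S * N - 1)" using k by simp
      have e2: "k = Suc (k - 1)" using k by simp
      have "Suc (S * N - 1) choose Suc (k - 1) = ((S * N - 1) choose (k - 1)) + ((S * N - 1) choose Suc (k - 1))"
        by (rule binomial_Suc_Suc)
      thus ?thesis using e1 e2 by simp
    qed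
    moreover have "S * N - 1 \<le> ((S * N - 1) choose (k - 1))"
      using k by (intro binom_ge_m) auto
    ultimately show ?thesis using A by linarith
  qed
  have A2: "A \<ge> 2" using Abig k by linarith
  have lnA: "ln A > 0" using A2 by simp
  have Tpos: "T > 0" using T eps lnA N1 by simp
  have T2: "T^2 = (1 + \<epsilon>)^2 * (2 * real N * ln A)"
    using T lnA by (simp add: power_mult_distrib)
  have hK: "N div h \<le> K" "real h \<le> 2 * real N / real K" using h_bounds[OF K(1) NK] by (simp_all add: h_def)
  have h1: "h \<ge> 1" by (simp add: h_def)
  have e1: "exp (-(((1 - \<eta>) * T)^2) / (2 * real N)) = A powr (- (((1 - \<eta>) * (1 + \<epsilon>))^2))"
  proof -
    have "((1 - \<eta>) * T)^2 / (2 * real N) = ((1 - \<eta>) * (1 + \<epsilon>))^2 * ln A"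
      using N1 by (simp only: power_mult_distrib T2) (simp add: field_simps)
    thus ?thesis using A2 by (simp add: exp_to_powr)
  qed
  have e2: "exp (-((\<eta> * T / 2)^2) / (2 * real h)) \<le> A powr (-4)"
  proof -
    have "16 * real h \<le> 32 * real N / real K" using hK(2) by simp
    also have "\<dots> \<le> \<eta>^2 * real N"
      using K N1 by (simp add: field_simps)
    also have "\<dots> \<le> \<eta>^2 * (1 + \<epsilon>)^2 * real N"
    proof -
      have "1 \<le> (1 + \<epsilon>)^2" using eps by (simp add: one_le_power)
      hence "\<eta>^2 * 1 \<le> \<eta>^2 * (1 + \<epsilon>)^2" by (intro mult_left_mono) auto
      thus ?thesis by (metis mult_right_mono mult_1_right of_nat_0_le_iff)
    qed
    finally have hh: "16 * real h \<le> \<eta>^2 * (1 + \<epsilon>)^2 * real N" .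
    have "(\<eta> * T / 2)^2 / (2 * real h) = \<eta>^2 * (1 + \<epsilon>)^2 * real N * ln A / (4 * real h)"
      using h1 by (simp only: power_mult_distrib power_divide T2) (simp add: field_simps)
    also have "\<dots> \<ge> 16 * real h * ln A / (4 * real h)"
      using hh lnA h1 by (intro divide_right_mono mult_right_mono) auto
    also have "16 * real h * ln A / (4 * real h) = 4 * ln A" using h1 by simp
    finally have "4 * ln A \<le> (\<eta> * T / 2)^2 / (2 * real h)" .
    hence "exp (-((\<eta> * T / 2)^2) / (2 * real h)) \<le> exp (- (4 * ln A))" by simp
    thus ?thesis using A2 exp_to_powr[of A 4] by simp
  qed
  have per: "real (card (bad P)) \<le> card ?F * \<beta>" if P: "P \<in> Pk N S k" for P
  proof -
    obtain s0 where g: "goodP P (Max (fst ` P)) s0 S" using Pk_good(1)[OF P] k by auto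
    have wN: "Max (fst ` P) < N" using Pk_good(2)[OF P] k by auto
    let ?w = "Max (fst ` P)"
    have "real (card (bad P)) \<le> 2 * real (card ?F) * ((real ((N - ?w) div h) + 1)^2 * exp (-(((1 - \<eta>) * T)^2) / (2 * real N))
        + (real (N - ?w) + 1)^2 * exp (-((\<eta> * T / 2)^2) / (2 * real h)))"
      using goodP.bad_P_bound[OF g h1 Tpos eta] unfolding bad_def by simp
    also have "\<dots> \<le> 2 * real (card ?F) * ((real K + 1)^2 * A powr (- (((1 - \<eta>) * (1 + \<epsilon>))^2))
        + (real N + 1)^2 * A powr (-4))"
    proof (intro mult_left_mono add_mono mult_mono)
      have "(N - ?w) div h \<le> N div h" by (intro div_le_mono) simp
      thus "(real ((N - ?w) div h) + 1)^2 \<le> (real K + 1)^2" using hK(1) by (intro power_mono) auto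
      show "exp (-(((1 - \<eta>) * T)^2) / (2 * real N)) \<le> A powr (- (((1 - \<eta>) * (1 + \<epsilon>))^2))" using e1 by simp
      show "(real (N - ?w) + 1)^2 \<le> (real N + 1)^2" by (intro power_mono) auto
      show "exp (-((\<eta> * T / 2)^2) / (2 * real h)) \<le> A powr (-4)" using e2 by simp
    qed auto
    finally show ?thesis by (simp add: \<beta>_def algebra_simps)
  qed
  have "{e \<in> ?F. \<exists>P\<in>Pk N S k. \<exists>a b. a < b \<and> b \<le> N - Max (fst ` P) \<and> T < \<bar>W P a b e\<bar>} = (\<Union>P\<in>Pk N S k. bad P)"
    unfolding bad_def by blast
  hence "real (card {e \<in> ?F. \<exists>P\<in>Pk N S k. \<exists>a b. a < b \<and> b \<le> N - Max (fst ` P) \<and> T < \<bar>W P a b e\<bar>})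
      \<le> (\<Sum>P\<in>Pk N S k. real (card (bad P)))"
    using of_nat_mono[OF card_UN_le[OF finite_Pk, of bad N S k], where 'a=real] by simp
  also have "\<dots> \<le> real (card (Pk N S k)) * (card ?F * \<beta>)"
    by (rule sum_bounded_above) (rule per)
  finally show ?thesis using cardPk by (simp add: \<beta>_def algebra_simps)
qed


lemma prob_lower:
  fixes S N K :: nat and \<epsilon> \<eta> :: real
  assumes S: "S > 0" and eps: "\<epsilon> > 0" and eta: "0 < \<eta>" "\<eta> < 1"
    and K: "K \<ge> 1" "32 \<le> \<eta>^2 * K" and NK: "N \<ge> K"
  shows "measure_pmf.prob (pmf_of_set (sign_families N S))
            {e. \<forall>k. 2 \<le> k \<and> k < S * N \<longrightarrow>
                 real_of_int (Phi k N S e) \<le> (1 + \<epsilon>) *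
                   sqrt (2 * real N * ln (real ((S * N) choose k) - real ((S * (N - 1)) choose k)))}
     \<ge> 1 - (\<Sum>k\<in>{2..<S*N}. (real ((S * N) choose k) - real ((S * (N - 1)) choose k)) *
            (2 * ((real K + 1)^2 * (real ((S * N) choose k) - real ((S * (N - 1)) choose k)) powr (- (((1 - \<eta>) * (1 + \<epsilon>))^2))
               + (real N + 1)^2 * (real ((S * N) choose k) - real ((S * (N - 1)) choose k)) powr (-4))))"
proof -
  let ?F = "sign_families N S"
  define Af where "Af k = real ((S * N) choose k) - real ((S * (N - 1)) choose k)" for k
  define Tf where "Tf k = (1 + \<epsilon>) * sqrt (2 * real N * ln (Af k))" for k
  define X where "X = {e. \<forall>k. 2 \<le> k \<and> k < S * N \<longrightarrow> real_of_int (Phi k N S e) \<le> Tf k}"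
  define bad where "bad k = {e \<in> ?F. \<exists>P\<in>Pk N S k. \<exists>a b. a < b \<and> b \<le> N - Max (fst ` P) \<and> Tf k < \<bar>W P a b e\<bar>}" for k
  define Bf where "Bf k = Af k * (2 * ((real K + 1)^2 * Af k powr (- (((1 - \<eta>) * (1 + \<epsilon>))^2)) + (real N + 1)^2 * Af k powr (-4)))" for k
  have fin: "finite ?F" by (rule finite_sf)
  have ne: "?F \<noteq> {}" by (rule sf_nonempty)
  have cF: "real (card ?F) > 0" using fin ne by (simp add: card_gt_0_iff)
  have sub: "?F - X \<subseteq> (\<Union>k\<in>{2..<S*N}. bad k)"
  proof
    fix e assume e: "e \<in> ?F - X"
    then obtain k where k: "2 \<le> k" "k < S * N" "\<not> real_of_int (Phi k N S e) \<le> Tf k" unfolding X_def by auto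
    then have "Tf k < real_of_int (Phi k N S e)" by simp
    from Phi_reduce[OF k(1,2) this] e have "e \<in> bad k" unfolding bad_def by auto
    moreover have "k \<in> {2..<S*N}" using k by auto
    ultimately show "e \<in> (\<Union>k\<in>{2..<S*N}. bad k)" by blast
  qed
  have bk: "real (card (bad k)) \<le> real (card ?F) * Bf k" if k: "k \<in> {2..<S*N}" for k
    unfolding bad_def Bf_def using k
    by (intro kbound[OF S eps eta K NK, where A="Af k"]) (auto simp: Af_def Tf_def)
  have "real (card (?F - X)) \<le> real (card (\<Union>k\<in>{2..<S*N}. bad k))"
    using sub by (intro of_nat_mono card_mono) (auto simp: bad_def intro: finite_subset[OF _ fin])
  also have "\<dots> \<le> (\<Sum>k\<in>{2..<S*N}. real (card (bad k)))"
    using of_nat_mono[OF card_UN_le[of "{2..<S*N}" bad], where 'a=real] by simp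
  also have "\<dots> \<le> (\<Sum>k\<in>{2..<S*N}. real (card ?F) * Bf k)" by (intro sum_mono bk)
  also have "\<dots> = real (card ?F) * (\<Sum>k\<in>{2..<S*N}. Bf k)" by (simp add: sum_distrib_left)
  finally have cb: "real (card (?F - X)) \<le> real (card ?F) * (\<Sum>k\<in>{2..<S*N}. Bf k)" .
  have "measure_pmf.prob (pmf_of_set ?F) X = real (card (?F \<inter> X)) / real (card ?F)"
    using measure_pmf_of_set[OF ne fin] by simp
  also have "real (card (?F \<inter> X)) = real (card ?F) - real (card (?F - X))"
  proof -
    have "card ?F = card (?F \<inter> X) + card (?F - X)"
      using card_Un_disjoint[of "?F \<inter> X" "?F - X"] fin by (metis Diff_Diff_Int Diff_disjoint Un_Diff_Int card_Int_Diff)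
    thus ?thesis by simp
  qed
  also have "(real (card ?F) - real (card (?F - X))) / real (card ?F) = 1 - real (card (?F - X)) / real (card ?F)"
    using cF by (simp add: field_simps)
  also have "\<dots> \<ge> 1 - (\<Sum>k\<in>{2..<S*N}. Bf k)"
    using cb cF by (simp add: field_simps)
  finally show ?thesis unfolding X_def Tf_def Af_def Bf_def .
qed


lemma A_ge_B:
  assumes S: "S > 0" and k: "2 \<le> k" "k < S * N"
  shows "real ((S * N - 1) choose (k - 1)) \<le> real ((S * N) choose k) - real ((S * (N - 1)) choose k)"
    "real (S * N - 1) \<le> real ((S * N - 1) choose (k - 1))"
proof -
  have N1: "N \<ge> 1" using k by (cases N) auto
  have "S * (N - 1) \<le> S * N - 1" using S N1 by (simp add: algebra_simps)
  hence a: "S * (N - 1) choose k \<le> (S * N - 1) choose k" by (rule binomial_right_mono)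
  have b: "S * N choose k = ((S * N - 1) choose k) + ((S * N - 1) choose (k - 1))"
  proof -
    have e1: "S * N = Suc (S * N - 1)" using k by simp
    have e2: "k = Suc (k - 1)" using k by simp
    have "Suc (S * N - 1) choose Suc (k - 1) = ((S * N - 1) choose (k - 1)) + ((S * N - 1) choose Suc (k - 1))"
      by (rule binomial_Suc_Suc)
    thus ?thesis using e1 e2 by simp
  qed
  show "real ((S * N - 1) choose (k - 1)) \<le> real ((S * N) choose k) - real ((S * (N - 1)) choose k)"
    using a b by simp
  have "S * N - 1 \<le> ((S * N - 1) choose (k - 1))" using k by (intro binom_ge_m) auto
  thus "real (S * N - 1) \<le> real ((S * N - 1) choose (k - 1))" by simp
qed

lemma term_bound:
  fixes A B \<delta> c1 c2 :: real
  assumes B: "0 < B" "B \<le> A" and d: "\<delta> > 0" and c: "c1 \<ge> 0" "c2 \<ge> 0"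
  shows "A * (2 * (c1 * A powr (- ((1 + \<delta>))) + c2 * A powr (-4)))
         \<le> 2 * (c1 * B powr (-\<delta>) + c2 * B powr (-3))"
proof -
  have Apos: "A > 0" using B by simp
  have "A * A powr (- (1 + \<delta>)) = A powr (-\<delta>)"
  proof -
    have "A powr (-\<delta>) = A powr (1 + (- (1 + \<delta>)))" by simp
    also have "\<dots> = A * A powr (- (1 + \<delta>))" using Apos by (simp only: powr_add powr_one)
    finally show ?thesis by simp
  qed
  moreover have "A * A powr (-4) = A powr (-3)"
  proof -
    have "A powr (-3) = A powr (1 + (-4))" by simp
    also have "\<dots> = A * A powr (-4)" using Apos by (simp only: powr_add powr_one)
    finally show ?thesis by simp
  qed
  moreover have "A * (2 * (c1 * A powr (- ((1 + \<delta>))) + c2 * A powr (-4))) = 2 * (c1 * (A * A powr (- (1 + \<delta>))) + c2 * (A * A powr (-4)))"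
    by (simp add: algebra_simps)
  ultimately have eq: "A * (2 * (c1 * A powr (- ((1 + \<delta>))) + c2 * A powr (-4))) = 2 * (c1 * A powr (-\<delta>) + c2 * A powr (-3))"
    by simp
  have m1: "A powr (-\<delta>) \<le> B powr (-\<delta>)" using B d by (intro powr_mono2') auto
  have m2: "A powr (-3) \<le> B powr (-3)" using B by (intro powr_mono2') auto
  show ?thesis unfolding eq using m1 m2 c by (intro mult_left_mono add_mono mult_left_mono) auto
qed


lemma powr_aux1:
  fixes m r \<delta> :: real
  assumes m: "m \<ge> r" and r: "r \<ge> 1" and rd: "r * \<delta> \<ge> 2"
  shows "m * (m / r) powr (- (r * \<delta>)) \<le> r^2 / m"
proof -
  have mr: "m / r \<ge> 1" using m r by simp
  have "(m / r) powr (- (r * \<delta>)) \<le> (m / r) powr (-2)" using mr rd by (intro powr_mono) auto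
  also have "(m / r) powr (-2) = r^2 / m^2"
    using mr r by (simp add: powr_minus_divide powr_divide power2_eq_square powr_realpow[symmetric] divide_simps)
  finally have "m * (m / r) powr (- (r * \<delta>)) \<le> m * (r^2 / m^2)" using m r by (intro mult_left_mono) auto
  also have "\<dots> = r^2 / m" using m r by (simp add: power2_eq_square)
  finally show ?thesis .
qed

lemma powr_aux2:
  fixes m :: real
  assumes m: "m \<ge> 2"
  shows "m * (m / 2) powr (- (2 * 3)) \<le> 16 * m powr (-3)"
proof -
  have mr: "m / 2 \<ge> 1" using m by simp
  have "(m / 2) powr (- (2 * 3)) \<le> (m / 2) powr (-4)" using mr by (intro powr_mono) auto
  also have "(m / 2) powr (-4) = 16 * m powr (-4)"
    using m by (simp add: powr_divide powr_minus_divide)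
  finally have "m * (m / 2) powr (- (2 * 3)) \<le> m * (16 * m powr (-4))" using m by (intro mult_left_mono) auto
  also have "m * (16 * m powr (-4)) = 16 * m powr (-3)"
  proof -
    have "m powr (-3) = m powr (1 + (-4))" by simp
    also have "\<dots> = m * m powr (-4)" using m by (simp only: powr_add powr_one)
    finally show ?thesis by simp
  qed
  finally show ?thesis .
qed

lemma sum_err:
  fixes S N K r :: nat and \<delta> :: real
  assumes S: "S > 0" and d: "\<delta> > 0" and r: "r \<ge> 1" "real r * \<delta> \<ge> 2"
    and M: "2 * r \<le> S * N - 1" "4 \<le> S * N - 1"
  shows "(\<Sum>k\<in>{2..<S*N}. (real ((S * N) choose k) - real ((S * (N - 1)) choose k)) *
            (2 * ((real K + 1)^2 * (real ((S * N) choose k) - real ((S * (N - 1)) choose k)) powr (- (1 + \<delta>))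
               + (real N + 1)^2 * (real ((S * N) choose k) - real ((S * (N - 1)) choose k)) powr (-4))))
     \<le> 2 * (real K + 1)^2 * (2 * (real r - 1) * real (S * N - 1) powr (-\<delta>) + (real r)^2 / real (S * N - 1))
       + 36 * (real N + 1)^2 * real (S * N - 1) powr (-3)"
proof -
  define Mn where "Mn = S * N - 1"
  define m where "m = real Mn"
  define Af where "Af k = real ((S * N) choose k) - real ((S * (N - 1)) choose k)" for k
  define g where "g j = 2 * ((real K + 1)^2 * real (Mn choose j) powr (-\<delta>) + (real N + 1)^2 * real (Mn choose j) powr (-3))" for j
  have m4: "m \<ge> 4" using M by (simp add: m_def Mn_def)
  have "(\<Sum>k\<in>{2..<S*N}. Af k * (2 * ((real K + 1)^2 * Af k powr (- (1 + \<delta>)) + (real N + 1)^2 * Af k powr (-4))))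
      \<le> (\<Sum>k\<in>{2..<S*N}. g (k - 1))"
  proof (intro sum_mono)
    fix k assume k: "k \<in> {2..<S*N}"
    have B: "real (Mn choose (k - 1)) \<le> Af k" "real Mn \<le> real (Mn choose (k - 1))"
      using A_ge_B[OF S, of k N] k by (auto simp: Af_def Mn_def)
    have "0 < real Mn" using m4 by (simp add: m_def)
    hence Bpos: "0 < real (Mn choose (k - 1))" using B(2) by linarith
    show "Af k * (2 * ((real K + 1)^2 * Af k powr (- (1 + \<delta>)) + (real N + 1)^2 * Af k powr (-4))) \<le> g (k - 1)"
      unfolding g_def by (rule term_bound[OF Bpos B(1) d]) auto
  qed
  also have "(\<Sum>k\<in>{2..<S*N}. g (k - 1)) = (\<Sum>j\<in>{1..Mn-1}. g j)"
    by (rule sum.reindex_bij_witness[where i="\<lambda>j. j + 1" and j="\<lambda>k. k - 1"]) (use M in \<open>auto simp: Mn_def\<close>)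
  also have "\<dots> = 2 * (real K + 1)^2 * (\<Sum>j\<in>{1..Mn-1}. real (Mn choose j) powr (-\<delta>))
      + 2 * (real N + 1)^2 * (\<Sum>j\<in>{1..Mn-1}. real (Mn choose j) powr (-3))"
    by (simp add: g_def sum.distrib sum_distrib_left algebra_simps)
  also have "\<dots> \<le> 2 * (real K + 1)^2 * (2 * (real r - 1) * m powr (-\<delta>) + (real r)^2 / m)
      + 2 * (real N + 1)^2 * (18 * m powr (-3))"
  proof (intro add_mono mult_left_mono)
    have "(\<Sum>j\<in>{1..Mn-1}. real (Mn choose j) powr (-\<delta>)) \<le> 2 * (real r - 1) * m powr (-\<delta>) + m * (m / real r) powr (- (real r * \<delta>))"
      unfolding m_def by (rule binom_sum_bound[OF d r(1)]) (use M in \<open>simp add: Mn_def\<close>)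
    also have "m * (m / real r) powr (- (real r * \<delta>)) \<le> (real r)^2 / m"
      by (rule powr_aux1) (use M r in \<open>auto simp: m_def Mn_def\<close>)
    finally show "(\<Sum>j\<in>{1..Mn-1}. real (Mn choose j) powr (-\<delta>)) \<le> 2 * (real r - 1) * m powr (-\<delta>) + (real r)^2 / m"
      by simp
    have "(\<Sum>j\<in>{1..Mn-1}. real (Mn choose j) powr (-3)) \<le> 2 * (real 2 - 1) * m powr (-3) + m * (m / real 2) powr (- (real 2 * 3))"
      unfolding m_def by (rule binom_sum_bound) (use M in \<open>simp_all add: Mn_def\<close>)
    also have "m * (m / real 2) powr (- (real 2 * 3)) \<le> 16 * m powr (-3)"
      using powr_aux2[of m] m4 by simp
    finally show "(\<Sum>j\<in>{1..Mn-1}. real (Mn choose j) powr (-3)) \<le> 18 * m powr (-3)" by simp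
  qed auto
  finally show ?thesis unfolding Af_def m_def Mn_def by (simp add: algebra_simps)
qed


lemma E_bound:
  fixes N S K r :: nat and \<delta> :: real
  assumes S: "S > 0" and N: "N \<ge> 2" and d: "\<delta> > 0" and r: "r \<ge> 1"
  shows "2 * (real K + 1)^2 * (2 * (real r - 1) * real (S * N - 1) powr (-\<delta>) + (real r)^2 / real (S * N - 1))
       + 36 * (real N + 1)^2 * real (S * N - 1) powr (-3)
     \<le> 4 * (real K + 1)^2 * (real r - 1) * (real N - 1) powr (-\<delta>) + (2 * (real K + 1)^2 * (real r)^2 + 324) / (real N - 1)"
proof -
  define m where "m = real (S * N - 1)"
  define n where "n = real N - 1"
  have SN: "S * N \<ge> N" using S by simp
  have nm: "n \<le> m" using SN N by (simp add: m_def n_def of_nat_diff)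
  have n1: "n \<ge> 1" using N by (simp add: n_def)
  have mpos: "m > 0" using nm n1 by simp
  have a1: "m powr (-\<delta>) \<le> n powr (-\<delta>)" using nm n1 d by (intro powr_mono2') auto
  have a2: "(real r)^2 / m \<le> (real r)^2 / n" using nm n1 by (intro divide_left_mono) auto
  have a3: "(real N + 1)^2 * m powr (-3) \<le> 9 / n"
  proof -
    have "real N + 1 \<le> 3 * m" using nm n1 by (simp add: n_def)
    hence le: "(real N + 1)^2 \<le> (3 * m)^2" by (intro power_mono) auto
    have eq: "m powr (-3) = 1 / m^3" using mpos by (simp add: powr_minus_divide powr_numeral)
    have "(real N + 1)^2 * (1 / m^3) \<le> (3 * m)^2 * (1 / m^3)"
      using mpos le by (intro mult_right_mono) auto
    hence "(real N + 1)^2 * m powr (-3) \<le> (3 * m)^2 * (1 / m^3)" by (simp only: eq)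
    also have "(3 * m)^2 * (1 / m^3) = 9 / m" using mpos by (simp add: power2_eq_square power3_eq_cube)
    also have "9 / m \<le> 9 / n" using nm n1 by (intro divide_left_mono) auto
    finally show ?thesis .
  qed
  have "2 * (real K + 1)^2 * (2 * (real r - 1) * m powr (-\<delta>) + (real r)^2 / m) + 36 * ((real N + 1)^2 * m powr (-3))
      \<le> 2 * (real K + 1)^2 * (2 * (real r - 1) * n powr (-\<delta>) + (real r)^2 / n) + 36 * (9 / n)"
    using r by (intro add_mono mult_left_mono a1 a2 a3) auto
  also have "\<dots> = 4 * (real K + 1)^2 * (real r - 1) * n powr (-\<delta>) + (2 * (real K + 1)^2 * (real r)^2 + 324) / n"
    using n1 by (simp add: field_simps)
  finally show ?thesis unfolding m_def n_def by (simp add: mult.assoc)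
qed

lemma Eprime_lim:
  fixes c1 c2 \<delta> :: real
  assumes "\<delta> > 0"
  shows "(\<lambda>N. c1 * (real N - 1) powr (-\<delta>) + c2 / (real N - 1)) \<longlonglongrightarrow> 0"
proof -
  have f: "filterlim (\<lambda>N. real N - 1) at_top sequentially"
    using filterlim_tendsto_add_at_top[OF tendsto_const[of "-1::real"] filterlim_real_sequentially]
    by simp
  have t1: "(\<lambda>N. (real N - 1) powr (-\<delta>)) \<longlonglongrightarrow> 0"
    using assms by (intro tendsto_neg_powr f) auto
  have t2: "(\<lambda>N. c2 / (real N - 1)) \<longlonglongrightarrow> 0"
    by (intro tendsto_divide_0[OF tendsto_const] filterlim_at_top_imp_at_infinity f)
  have "(\<lambda>N. c1 * (real N - 1) powr (-\<delta>) + c2 / (real N - 1)) \<longlonglongrightarrow> c1 * 0 + 0"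
    by (intro tendsto_add tendsto_mult t1 t2 tendsto_const)
  thus ?thesis by simp
qed


theorem theorem3:
  fixes S :: nat and \<epsilon> :: real
  assumes "S > 0" and "\<epsilon> > 0"
  shows "(\<lambda>N. measure_pmf.prob (pmf_of_set (sign_families N S))
            {e. \<forall>k. 2 \<le> k \<and> k < S * N \<longrightarrow>
                 real_of_int (Phi k N S e) \<le> (1 + \<epsilon>) *
                   sqrt (2 * real N * ln (real ((S * N) choose k) - real ((S * (N - 1)) choose k)))})
         \<longlonglongrightarrow> 1"
proof -
  note S = assms(1) and eps = assms(2)
  define \<eta> where "\<eta> = \<epsilon> / (2 * (1 + \<epsilon>))"
  have eta: "0 < \<eta>" "\<eta> < 1" using eps by (auto simp: \<eta>_def field_simps)
  have key: "(1 - \<eta>) * (1 + \<epsilon>) = 1 + \<epsilon> / 2" using eps by (simp add: \<eta>_def field_simps)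
  define \<delta> where "\<delta> = ((1 - \<eta>) * (1 + \<epsilon>))^2 - 1"
  have ex: "((1 - \<eta>) * (1 + \<epsilon>))^2 = 1 + \<delta>" by (simp add: \<delta>_def)
  have d: "\<delta> > 0"
  proof -
    have "1 < 1 + \<epsilon> / 2" using eps by simp
    hence "1 < (1 + \<epsilon> / 2)^2" by (metis less_trans one_less_power pos2 zero_less_one)
    thus ?thesis unfolding \<delta>_def key by simp
  qed
  define K where "K = nat \<lceil>32 / \<eta>^2\<rceil> + 1"
  have K1: "K \<ge> 1" by (simp add: K_def)
  have K32: "32 \<le> \<eta>^2 * real K"
  proof -
    have "32 / \<eta>^2 \<le> real K" unfolding K_def by linarith
    thus ?thesis using eta by (simp add: field_simps)
  qed
  define r where "r = nat \<lceil>2 / \<delta>\<rceil> + 1"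
  have r1: "r \<ge> 1" by (simp add: r_def)
  have rd: "real r * \<delta> \<ge> 2"
  proof -
    have "2 / \<delta> \<le> real r" unfolding r_def by linarith
    thus ?thesis using d by (simp add: field_simps)
  qed
  define c1 where "c1 = 4 * (real K + 1)^2 * (real r - 1)"
  define c2 where "c2 = 2 * (real K + 1)^2 * (real r)^2 + 324"
  define Pr where "Pr N = measure_pmf.prob (pmf_of_set (sign_families N S))
            {e. \<forall>k. 2 \<le> k \<and> k < S * N \<longrightarrow>
                 real_of_int (Phi k N S e) \<le> (1 + \<epsilon>) *
                   sqrt (2 * real N * ln (real ((S * N) choose k) - real ((S * (N - 1)) choose k)))}" for N
  have low: "eventually (\<lambda>N. 1 - (c1 * (real N - 1) powr (-\<delta>) + c2 / (real N - 1)) \<le> Pr N) sequentially"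
    using eventually_ge_at_top[of "max K (2 * r + 5)"]
  proof eventually_elim
    case (elim N)
    then have NK: "N \<ge> K" and N2: "N \<ge> 2 * r + 5" by auto
    have SN: "S * N \<ge> N" using S by simp
    have M: "2 * r \<le> S * N - 1" "4 \<le> S * N - 1" using SN N2 by linarith+
    have "Pr N \<ge> 1 - (\<Sum>k\<in>{2..<S*N}. (real ((S * N) choose k) - real ((S * (N - 1)) choose k)) *
            (2 * ((real K + 1)^2 * (real ((S * N) choose k) - real ((S * (N - 1)) choose k)) powr (- (1 + \<delta>))
               + (real N + 1)^2 * (real ((S * N) choose k) - real ((S * (N - 1)) choose k)) powr (-4))))"
      using prob_lower[OF S eps eta K1 K32 NK] unfolding Pr_def ex .
    moreover have "(\<Sum>k\<in>{2..<S*N}. (real ((S * N) choose k) - real ((S * (N - 1)) choose k)) *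
            (2 * ((real K + 1)^2 * (real ((S * N) choose k) - real ((S * (N - 1)) choose k)) powr (- (1 + \<delta>))
               + (real N + 1)^2 * (real ((S * N) choose k) - real ((S * (N - 1)) choose k)) powr (-4))))
        \<le> 2 * (real K + 1)^2 * (2 * (real r - 1) * real (S * N - 1) powr (-\<delta>) + (real r)^2 / real (S * N - 1))
       + 36 * (real N + 1)^2 * real (S * N - 1) powr (-3)"
      by (rule sum_err[OF S d r1 rd M])
    moreover have "2 * (real K + 1)^2 * (2 * (real r - 1) * real (S * N - 1) powr (-\<delta>) + (real r)^2 / real (S * N - 1))
       + 36 * (real N + 1)^2 * real (S * N - 1) powr (-3) \<le> c1 * (real N - 1) powr (-\<delta>) + c2 / (real N - 1)"
      unfolding c1_def c2_def using E_bound[OF S _ d r1, of N K] N2 by simp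
    ultimately show ?case by linarith
  qed
  have up: "eventually (\<lambda>N. Pr N \<le> 1) sequentially"
    by (simp add: Pr_def measure_pmf.prob_le_1)
  have lim: "(\<lambda>N. 1 - (c1 * (real N - 1) powr (-\<delta>) + c2 / (real N - 1))) \<longlonglongrightarrow> 1 - 0"
    by (intro tendsto_diff tendsto_const Eprime_lim d)
  have "Pr \<longlonglongrightarrow> 1"
    by (rule tendsto_sandwich[OF low up]) (use lim in simp_all)
  thus ?thesis unfolding Pr_def .
qed


end
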